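(* Let $G=(V,E)$ be a connected undirected unweighted graph on $N\ge1$ vertices such that every vertex has degree $d_1$ or $d_2$, where $d_1\le d_2$. Let $n_1$ be the number of vertices of degree $d_1$ and $n_2$ the number of vertices of degree $d_2$ (so $N=n_1+n_2$). For $\delta\in[0,1]$ let $\rho_1(\delta)=\mathsf{fp}_{r=1}^\delta(G,\{u\})$ for any $u$ with $\deg(u)=d_1$ and $\rho_2(\delta)=\mathsf{fp}_{r=1}^\delta(G,\{u\})$ for any $u$ with $\deg(u)=d_2$. Then for all $\delta\in[0,1]$ the derivatives $\rho_1'(\delta)$ and $\rho_2'(\delta)$ exist and $$\rho_1'(\delta)=-n_2\,Q(\delta),\qquad\rho_2'(\delta)=n_1\,Q(\delta),\qquad Q(\delta)=\frac{(d_2-d_1)(d_1+d_2)}{D(\delta)^2},$$ where $D(\delta)=d_1n_2+d_2n_1+\delta(d_1-d_2)(n_1-n_2)$. If $d_1<d_2$, then $\rho_1'(\delta)<0$ and $\rho_2'(\delta)>0$ for all $\delta\in[0,1]$; otherwise $\rho_1'(\delta)=\rho_2'(\delta)=0$ for all $\delta$.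
   Context: Mixed $\delta$-updating on $G$: each vertex holds a mutant (fitness $r$) or wild-type (fitness $1$); $f_S(x)$ is the fitness at $x$ when $S$ is the mutant set. At each step, with probability $\delta$ a death-Birth step: choose $v$ uniformly to die, choose a neighbor $u$ of $v$ with probability proportional to $f_S(u)$, $u$ copies its type onto $v$; with probability $1-\delta$ a Birth-death step: choose $u$ with probability proportional to $f_S(u)$ among all vertices, choose a uniformly random neighbor $v$ of $u$, $u$ copies its type onto $v$. $\mathsf{fp}_r^\delta(G,S_0)$ is the probability all vertices eventually become mutant from initial mutant set $S_0$ (with $r=1$, the value for a single starting vertex depends only on its degree here). *)

theory Defs
  imports "HOL-Analysis.Analysis"
begin

definition simple_graph :: "'a set \<Rightarrow> ('a \<Rightarrow> 'a \<Rightarrow> bool) \<Rightarrow> bool" where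
  "simple_graph V E \<longleftrightarrow> finite V \<and> (\<forall>u v. E u v \<longrightarrow> u \<in> V \<and> v \<in> V)
     \<and> (\<forall>u v. E u v \<longrightarrow> E v u) \<and> (\<forall>u. \<not> E u u)"

definition connected_graph :: "'a set \<Rightarrow> ('a \<Rightarrow> 'a \<Rightarrow> bool) \<Rightarrow> bool" where
  "connected_graph V E \<longleftrightarrow> (\<forall>u\<in>V. \<forall>v\<in>V. E\<^sup>*\<^sup>* u v)"

definition nbrs :: "'a set \<Rightarrow> ('a \<Rightarrow> 'a \<Rightarrow> bool) \<Rightarrow> 'a \<Rightarrow> 'a set" where
  "nbrs V E v = {u \<in> V. E v u}"

definition deg :: "'a set \<Rightarrow> ('a \<Rightarrow> 'a \<Rightarrow> bool) \<Rightarrow> 'a \<Rightarrow> nat" where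
  "deg V E v = card (nbrs V E v)"

definition fit :: "real \<Rightarrow> 'a set \<Rightarrow> 'a \<Rightarrow> real" where
  "fit r S x = (if x \<in> S then r else 1)"

text \<open>Ordered pairs (u,v) with u adjacent to v: u reproduces onto v.\<close>
definition arcs :: "'a set \<Rightarrow> ('a \<Rightarrow> 'a \<Rightarrow> bool) \<Rightarrow> ('a \<times> 'a) set" where
  "arcs V E = {(u, v). u \<in> V \<and> v \<in> V \<and> E u v}"

text \<open>Probability that in one step of mixed delta-updating, u copies its type onto v:
 with probability delta a death-Birth step (v dies uniformly, then neighbour u chosen
 proportional to fitness), with probability 1-delta a Birth-death step (u chosen
 proportional to fitness among all vertices, then v a uniform neighbour of u).\<close>
definition step_prob :: "'a set \<Rightarrow> ('a \<Rightarrow> 'a \<Rightarrow> bool) \<Rightarrow> real \<Rightarrow> real \<Rightarrow> 'a set \<Rightarrow> 'a \<Rightarrow> 'a \<Rightarrow> real" where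
  "step_prob V E r \<delta> S u v =
     \<delta> * (1 / real (card V)) * (fit r S u / (\<Sum>w\<in>nbrs V E v. fit r S w))
   + (1 - \<delta>) * (fit r S u / (\<Sum>w\<in>V. fit r S w)) * (1 / real (deg V E u))"

definition copy_type :: "'a set \<Rightarrow> 'a \<Rightarrow> 'a \<Rightarrow> 'a set" where
  "copy_type S u v = (if u \<in> S then insert v S else S - {v})"

text \<open>hit n S: probability that, starting from mutant set S, all vertices are mutant
 at some time \<le> n.\<close>
primrec hit :: "'a set \<Rightarrow> ('a \<Rightarrow> 'a \<Rightarrow> bool) \<Rightarrow> real \<Rightarrow> real \<Rightarrow> nat \<Rightarrow> 'a set \<Rightarrow> real" where
  "hit V E r \<delta> 0 S = (if S = V then 1 else 0)"
| "hit V E r \<delta> (Suc n) S = (if S = V then 1 else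
     (\<Sum>(u, v)\<in>arcs V E. step_prob V E r \<delta> S u v * hit V E r \<delta> n (copy_type S u v)))"

text \<open>Fixation probability fp_r^delta(G, S0): probability that all vertices eventually
 become mutant (limit of the non-decreasing sequence hit n S0).\<close>
definition fp :: "'a set \<Rightarrow> ('a \<Rightarrow> 'a \<Rightarrow> bool) \<Rightarrow> real \<Rightarrow> real \<Rightarrow> 'a set \<Rightarrow> real" where
  "fp V E r \<delta> S0 = lim (\<lambda>n. hit V E r \<delta> n S0)"

end

theory Submission
  imports Defs
begin

lemma arcs_Sigma: "arcs V E = Sigma V (nbrs V E)"
  by (auto simp: arcs_def nbrs_def)

lemma finite_arcs: "simple_graph V E \<Longrightarrow> finite (arcs V E)"
  unfolding arcs_Sigma simple_graph_def nbrs_def by auto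

lemma arcs_swap:
  assumes "simple_graph V E"
  shows "(\<Sum>(u,v)\<in>arcs V E. f u v) = (\<Sum>(u,v)\<in>arcs V E. f v u)"
  apply (rule sum.reindex_bij_witness[where i=prod.swap and j=prod.swap])
  using assms by (auto simp: arcs_def simple_graph_def)

lemma step_prob_1:
  "step_prob V E 1 \<delta> S u v = \<delta> / (real (card V) * real (deg V E v))
     + (1 - \<delta>) / (real (card V) * real (deg V E u))"
  by (simp add: step_prob_def fit_def deg_def)

lemma deg_pos:
  assumes "simple_graph V E" "connected_graph V E" "card V \<ge> 2" "u \<in> V"
  shows "deg V E u \<ge> 1"
proof -
  have fin: "finite V" using assms(1) by (simp add: simple_graph_def)
  obtain v where v: "v \<in> V" "v \<noteq> u"
  proof -
    have "V - {u} \<noteq> {}"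
    proof
      assume "V - {u} = {}"
      then have "V = {u}" using assms(4) by auto
      then show False using assms(3) by simp
    qed
    then show ?thesis using that by blast
  qed
  have "E\<^sup>*\<^sup>* u v" using assms(2,4) v by (simp add: connected_graph_def)
  then obtain z where "E u z" using v(2) by (metis converse_rtranclpE)
  then have "z \<in> nbrs V E u" using assms(1) by (auto simp: nbrs_def simple_graph_def)
  moreover have "finite (nbrs V E u)" using fin by (simp add: nbrs_def)
  ultimately show ?thesis unfolding deg_def
    by (metis One_nat_def Suc_leI card_gt_0_iff empty_iff)
qed

lemma sum_arcs_inv_deg:
  assumes "simple_graph V E" "\<And>u. u \<in> V \<Longrightarrow> deg V E u \<ge> 1"
  shows "(\<Sum>(u,v)\<in>arcs V E. 1 / real (deg V E u)) = real (card V)"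
proof -
  have fin: "finite V" using assms(1) by (simp add: simple_graph_def)
  have "(\<Sum>(u,v)\<in>arcs V E. 1 / real (deg V E u)) = (\<Sum>u\<in>V. \<Sum>v\<in>nbrs V E u. 1 / real (deg V E u))"
    unfolding arcs_Sigma
    by (rule sum.Sigma[symmetric]) (use fin in \<open>auto simp: nbrs_def\<close>)
  also have "\<dots> = (\<Sum>u\<in>V. 1)"
  proof (rule sum.cong)
    fix u assume "u \<in> V"
    then have "deg V E u \<ge> 1" by (rule assms(2))
    then show "(\<Sum>v\<in>nbrs V E u. 1 / real (deg V E u)) = 1"
      by (simp add: deg_def)
  qed simp
  finally show ?thesis by simp
qed

lemma sum_step_prob:
  assumes "simple_graph V E" "\<And>u. u \<in> V \<Longrightarrow> deg V E u \<ge> 1"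
    and "V \<noteq> {}"
  shows "(\<Sum>(u,v)\<in>arcs V E. step_prob V E 1 \<delta> S u v) = 1"
proof -
  have fin: "finite V" using assms(1) by (simp add: simple_graph_def)
  have ne: "card V > 0" using fin assms(3) by auto
  have A: "(\<Sum>(u,v)\<in>arcs V E. 1 / real (deg V E v)) = real (card V)"
    using arcs_swap[OF assms(1), of "\<lambda>u v. 1 / real (deg V E v)"] sum_arcs_inv_deg[OF assms(1,2)] by simp
  have "(\<Sum>(u,v)\<in>arcs V E. step_prob V E 1 \<delta> S u v) =
     (\<Sum>(u,v)\<in>arcs V E. (\<delta> / real (card V)) * (1 / real (deg V E v)) + ((1 - \<delta>) / real (card V)) * (1 / real (deg V E u)))"
    by (rule sum.cong) (auto simp: step_prob_1)
  also have "\<dots> = (\<delta> / real (card V)) * (\<Sum>(u,v)\<in>arcs V E. 1 / real (deg V E v))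
      + ((1 - \<delta>) / real (card V)) * (\<Sum>(u,v)\<in>arcs V E. 1 / real (deg V E u))"
    by (simp add: sum.distrib sum_distrib_left case_prod_unfold)
  also have "\<dots> = 1" using A sum_arcs_inv_deg[OF assms(1,2)] ne by (simp add: field_simps)
  finally show ?thesis .
qed

locale G =
  fixes V :: "'a set" and E :: "'a \<Rightarrow> 'a \<Rightarrow> bool" and \<delta> :: real
  assumes sg: "simple_graph V E" and cg: "connected_graph V E"
    and degp: "\<And>u. u \<in> V \<Longrightarrow> deg V E u \<ge> 1" and ne: "V \<noteq> {}"
    and d0: "0 \<le> \<delta>" and d1: "\<delta> \<le> 1"
begin

definition p where "p u v = \<delta> / (real (card V) * real (deg V E v))
     + (1 - \<delta>) / (real (card V) * real (deg V E u))"

lemma finV: "finite V" using sg by (simp add: simple_graph_def)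
lemma finA: "finite (arcs V E)" using sg by (rule finite_arcs)

lemma p_indep: "step_prob V E 1 \<delta> S u v = p u v"
  by (simp add: step_prob_1 p_def)

lemma p_nonneg: "p u v \<ge> 0"
  using d0 d1 by (simp add: p_def)

lemma p_pos: "(u,v) \<in> arcs V E \<Longrightarrow> p u v > 0"
proof -
  assume a: "(u,v) \<in> arcs V E"
  then have "u \<in> V" "v \<in> V" by (auto simp: arcs_def)
  then have "deg V E u \<ge> 1" "deg V E v \<ge> 1" using degp by auto
  moreover have "card V > 0" using finV ne by auto
  ultimately have "real (card V) * real (deg V E v) > 0" "real (card V) * real (deg V E u) > 0"
    by auto
  then show ?thesis using d0 d1 unfolding p_def
    by (cases "\<delta> = 0") (auto intro!: add_pos_nonneg divide_pos_pos divide_nonneg_pos)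
qed

lemma sum_p: "(\<Sum>(u,v)\<in>arcs V E. p u v) = 1"
  using sum_step_prob[OF sg degp ne] by (simp add: step_prob_1 p_def)

lemma hit_Suc: "hit V E 1 \<delta> (Suc n) S = (if S = V then 1 else
     (\<Sum>(u, v)\<in>arcs V E. p u v * hit V E 1 \<delta> n (copy_type S u v)))"
  by (simp add: p_indep)

declare hit.simps(2)[simp del]

lemma hit_nonneg: "hit V E 1 \<delta> n S \<ge> 0"
proof (induction n arbitrary: S)
  case 0 then show ?case by simp
next
  case (Suc n) then show ?case
    unfolding hit_Suc by (auto intro!: sum_nonneg mult_nonneg_nonneg p_nonneg)
qed

lemma hit_le1: "hit V E 1 \<delta> n S \<le> 1"
proof (induction n arbitrary: S)
  case 0 then show ?case by simp
next
  case (Suc n)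
  have "(\<Sum>(u, v)\<in>arcs V E. p u v * hit V E 1 \<delta> n (copy_type S u v)) \<le> (\<Sum>(u,v)\<in>arcs V E. p u v)"
    by (rule sum_mono) (auto intro!: mult_right_le_one_le p_nonneg hit_nonneg Suc)
  then show ?case unfolding hit_Suc sum_p by auto
qed

lemma hit_mono: "hit V E 1 \<delta> n S \<le> hit V E 1 \<delta> (Suc n) S"
proof (induction n arbitrary: S)
  case 0
  show ?case
  proof (cases "S = V")
    case True then show ?thesis by (simp add: hit_Suc)
  next
    case False
    then have "hit V E 1 \<delta> 0 S = 0" by simp
    then show ?thesis using hit_nonneg[of "Suc 0" S] by linarith
  qed
next
  case (Suc n)
  show ?case
    apply (subst (1 2) hit_Suc)
    by (auto intro!: sum_mono mult_left_mono p_nonneg Suc.IH)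
qed

lemma hit_lim: "(\<lambda>n. hit V E 1 \<delta> n S) \<longlonglongrightarrow> fp V E 1 \<delta> S"
proof -
  have "(\<lambda>n. hit V E 1 \<delta> n S) \<longlonglongrightarrow> (SUP i. hit V E 1 \<delta> i S)"
    by (rule LIMSEQ_incseq_SUP) (auto intro!: hit_le1 incseq_SucI hit_mono)
  then show ?thesis unfolding fp_def by (metis limI)
qed

lemma fp_V: "fp V E 1 \<delta> V = 1"
proof -
  have "hit V E 1 \<delta> n V = 1" for n by (cases n) (auto simp: hit_Suc)
  then show ?thesis using hit_lim[of V] by (simp add: LIMSEQ_const_iff)
qed

lemma fp_empty: "fp V E 1 \<delta> {} = 0"
proof -
  have "hit V E 1 \<delta> n {} = 0" for n
    by (induction n) (use ne in \<open>auto simp: copy_type_def hit_Suc\<close>)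
  then show ?thesis using hit_lim[of "{}"] by (simp add: LIMSEQ_const_iff)
qed

lemma fp_harm: "S \<noteq> V \<Longrightarrow> fp V E 1 \<delta> S = (\<Sum>(u, v)\<in>arcs V E. p u v * fp V E 1 \<delta> (copy_type S u v))"
proof -
  assume "S \<noteq> V"
  then have eq: "hit V E 1 \<delta> (Suc n) S = (\<Sum>(u, v)\<in>arcs V E. p u v * hit V E 1 \<delta> n (copy_type S u v))" for n
    using \<open>S \<noteq> V\<close> unfolding hit_Suc by simp
  have "(\<lambda>n. hit V E 1 \<delta> (Suc n) S) \<longlonglongrightarrow> fp V E 1 \<delta> S"
    using hit_lim LIMSEQ_Suc by blast
  moreover have "(\<lambda>n. hit V E 1 \<delta> (Suc n) S) \<longlonglongrightarrow> (\<Sum>(u, v)\<in>arcs V E. p u v * fp V E 1 \<delta> (copy_type S u v))"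
    unfolding eq case_prod_unfold
    by (intro tendsto_sum tendsto_mult tendsto_const hit_lim)
  ultimately show ?thesis by (rule LIMSEQ_unique)
qed

lemma crossing_path: "E\<^sup>*\<^sup>* x y \<Longrightarrow> x \<in> S \<Longrightarrow> y \<notin> S \<Longrightarrow> \<exists>a b. E a b \<and> a \<in> S \<and> b \<notin> S"
proof (induction rule: rtranclp_induct)
  case base then show ?case by simp
next
  case (step y z)
  then show ?case by (cases "y \<in> S") auto
qed

lemma crossing:
  assumes "S \<subseteq> V" "S \<noteq> {}" "S \<noteq> V"
  shows "\<exists>a b. (a,b) \<in> arcs V E \<and> a \<in> S \<and> b \<notin> S"
proof -
  obtain x where x: "x \<in> S" using assms(2) by blast
  obtain y where y: "y \<in> V" "y \<notin> S" using assms(1,3) by blast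
  have "E\<^sup>*\<^sup>* x y" using cg x y assms(1) by (auto simp: connected_graph_def)
  then obtain a b where "E a b" "a \<in> S" "b \<notin> S" using crossing_path x y by blast
  moreover then have "a \<in> V" "b \<in> V" using sg by (auto simp: simple_graph_def)
  ultimately show ?thesis by (auto simp: arcs_def)
qed

lemma copy_sub: "S \<subseteq> V \<Longrightarrow> (u,v) \<in> arcs V E \<Longrightarrow> copy_type S u v \<subseteq> V"
  by (auto simp: copy_type_def arcs_def)

lemma maxp:
  fixes f :: "'a set \<Rightarrow> real"
  assumes f0: "f {} = 0" and fV: "f V = 0"
    and harm: "\<And>S. S \<subseteq> V \<Longrightarrow> S \<noteq> {} \<Longrightarrow> S \<noteq> V \<Longrightarrow> f S = (\<Sum>(u,v)\<in>arcs V E. p u v * f (copy_type S u v))"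
    and S: "S \<subseteq> V"
  shows "f S \<le> 0"
proof -
  define M where "M = Max (f ` Pow V)"
  have finP: "finite (Pow V)" using finV by simp
  have fM: "f X \<le> M" if "X \<subseteq> V" for X
    unfolding M_def using finP that by (intro Max_ge) auto
  define T where "T = {X \<in> Pow V. f X = M}"
  have "M \<in> f ` Pow V" unfolding M_def using finP by (intro Max_in) auto
  then have Tne: "T \<noteq> {}" unfolding T_def by auto
  have finT: "finite T" unfolding T_def using finP by simp
  define m where "m = Max (card ` T)"
  have "m \<in> card ` T" unfolding m_def using finT Tne by (intro Max_in) auto
  then obtain S0 where S0: "S0 \<in> T" "card S0 = m" by auto
  have mmax: "card X \<le> m" if "X \<in> T" for X unfolding m_def using finT that by (intro Max_ge) auto
  have "M \<le> 0"
  proof (rule ccontr)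
    assume "\<not> M \<le> 0"
    then have Mp: "M > 0" by simp
    have S0V: "S0 \<subseteq> V" and fS0: "f S0 = M" using S0 by (auto simp: T_def)
    have "S0 \<noteq> {}" using fS0 f0 Mp by auto
    moreover have "S0 \<noteq> V" using fS0 fV Mp by auto
    ultimately obtain a b where ab: "(a,b) \<in> arcs V E" "a \<in> S0" "b \<notin> S0"
      using crossing S0V by blast
    have cab: "copy_type S0 a b = insert b S0" using ab by (simp add: copy_type_def)
    have cabV: "insert b S0 \<subseteq> V" using copy_sub[OF S0V ab(1)] cab by simp
    have "f (insert b S0) \<noteq> M"
    proof
      assume "f (insert b S0) = M"
      then have "insert b S0 \<in> T" using cabV by (auto simp: T_def)
      then have "card (insert b S0) \<le> m" by (rule mmax)
      moreover have "card (insert b S0) = Suc (card S0)"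
        using ab(3) finite_subset[OF S0V finV] by simp
      ultimately show False using S0(2) by simp
    qed
    then have lt: "f (copy_type S0 a b) < M" using fM[OF cabV] cab by simp
    have "f S0 = (\<Sum>(u,v)\<in>arcs V E. p u v * f (copy_type S0 u v))"
      using harm[OF S0V \<open>S0 \<noteq> {}\<close> \<open>S0 \<noteq> V\<close>] .
    also have "\<dots> < (\<Sum>(u,v)\<in>arcs V E. p u v * M)"
    proof (rule sum_strict_mono_ex1[OF finA])
      show "\<forall>x\<in>arcs V E. (case x of (u, v) \<Rightarrow> p u v * f (copy_type S0 u v)) \<le> (case x of (u, v) \<Rightarrow> p u v * M)"
        using copy_sub[OF S0V] fM by (auto intro!: mult_left_mono p_nonneg)
      show "\<exists>x\<in>arcs V E. (case x of (u, v) \<Rightarrow> p u v * f (copy_type S0 u v)) < (case x of (u, v) \<Rightarrow> p u v * M)"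
        using ab(1) lt p_pos[OF ab(1)] by (intro bexI[of _ "(a,b)"]) auto
    qed
    also have "\<dots> = M * (\<Sum>(u,v)\<in>arcs V E. p u v)"
      by (simp add: sum_distrib_left case_prod_unfold mult.commute)
    also have "\<dots> = M" using sum_p by simp
    finally show False using fS0 by simp
  qed
  then show ?thesis using fM[OF S] by simp
qed

lemma unique_harm:
  fixes f g :: "'a set \<Rightarrow> real"
  assumes "f {} = g {}" "f V = g V"
    and "\<And>S. S \<subseteq> V \<Longrightarrow> S \<noteq> {} \<Longrightarrow> S \<noteq> V \<Longrightarrow> f S = (\<Sum>(u,v)\<in>arcs V E. p u v * f (copy_type S u v))"
    and "\<And>S. S \<subseteq> V \<Longrightarrow> S \<noteq> {} \<Longrightarrow> S \<noteq> V \<Longrightarrow> g S = (\<Sum>(u,v)\<in>arcs V E. p u v * g (copy_type S u v))"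
    and S: "S \<subseteq> V"
  shows "f S = g S"
proof -
  have "f S - g S \<le> 0"
    by (rule maxp[of "\<lambda>S. f S - g S"]) (use assms in \<open>auto simp: right_diff_distrib sum_subtractf case_prod_unfold\<close>)
  moreover have "g S - f S \<le> 0"
    by (rule maxp[of "\<lambda>S. g S - f S"]) (use assms in \<open>auto simp: right_diff_distrib sum_subtractf case_prod_unfold\<close>)
  ultimately show ?thesis by simp
qed

end

lemma harm_aux:
  fixes P Q wv wu HS Hc :: real
  assumes "P * wv = Q * wu" "Hc = HS + (if A then wv else if B then - wv else 0)" "\<not> (A \<and> B)"
  shows "P * Hc = P * HS + (P * (if A then wv else 0) - Q * (if B then wu else 0))"
  using assms by (cases A; cases B) (auto simp: algebra_simps)

locale G2 = G +
  fixes d1 d2 :: nat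
  assumes degs: "\<And>v. v \<in> V \<Longrightarrow> deg V E v = d1 \<or> deg V E v = d2"
    and d1p: "d1 \<ge> 1" and d2p: "d2 \<ge> 1"
begin

definition w :: "'a \<Rightarrow> real" where
  "w x = \<delta> * real (deg V E x) + (1 - \<delta>) * (real d1 + real d2 - real (deg V E x))"

definition H :: "'a set \<Rightarrow> real" where "H S = (\<Sum>x\<in>S. w x)"

lemma w_pos: "x \<in> V \<Longrightarrow> w x > 0"
proof -
  assume "x \<in> V"
  then consider "deg V E x = d1" | "deg V E x = d2" using degs by blast
  then obtain a b :: real where "w x = \<delta> * a + (1 - \<delta>) * b" "a \<ge> 1" "b \<ge> 1"
    using d1p d2p unfolding w_def by cases auto
  moreover have "\<delta> * a + (1 - \<delta>) * b \<ge> \<delta> * 1 + (1 - \<delta>) * 1"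
    using calculation d0 d1 by (intro add_mono mult_left_mono) auto
  ultimately show ?thesis by simp
qed

lemma balance:
  assumes "(u,v) \<in> arcs V E"
  shows "p u v * w v = p v u * w u"
proof -
  have uv: "u \<in> V" "v \<in> V" using assms by (auto simp: arcs_def)
  have N: "real (card V) > 0" using finV ne by auto
  have a1: "real d1 > 0" "real d2 > 0" using d1p d2p by auto
  from degs[OF uv(1)] degs[OF uv(2)] show ?thesis
    using N a1 unfolding w_def p_def
    by (elim disjE) (simp_all add: field_simps; algebra)+
qed

lemma H_copy:
  assumes "S \<subseteq> V" "(u,v) \<in> arcs V E"
  shows "H (copy_type S u v) = H S + (if u \<in> S \<and> v \<notin> S then w v else if v \<in> S \<and> u \<notin> S then - w v else 0)"
proof -
  have fS: "finite S" using assms(1) finV finite_subset by blast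
  show ?thesis unfolding H_def copy_type_def
    using fS by (auto simp: sum.insert_remove sum_diff1)
qed

lemma H_harm:
  assumes S: "S \<subseteq> V"
  shows "H S = (\<Sum>(u,v)\<in>arcs V E. p u v * H (copy_type S u v))"
proof -
  define g where "g u v = p u v * (if u \<in> S \<and> v \<notin> S then w v else 0)" for u v
  have "(\<Sum>(u,v)\<in>arcs V E. p u v * H (copy_type S u v))
      = (\<Sum>(u,v)\<in>arcs V E. p u v * H S + (g u v - g v u))"
  proof (rule sum.cong)
    fix x assume x: "x \<in> arcs V E"
    obtain u v where xe: "x = (u,v)" by (cases x)
    have b: "p u v * w v = p v u * w u" using balance x xe by blast
    show "(case x of (u, v) \<Rightarrow> p u v * H (copy_type S u v)) = (case x of (u, v) \<Rightarrow> p u v * H S + (g u v - g v u))"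
      unfolding xe prod.case g_def
      by (rule harm_aux[OF b H_copy[OF S x[unfolded xe]]]) auto
  qed simp
  also have "\<dots> = H S * (\<Sum>(u,v)\<in>arcs V E. p u v) + ((\<Sum>(u,v)\<in>arcs V E. g u v) - (\<Sum>(u,v)\<in>arcs V E. g v u))"
    by (simp add: sum.distrib sum_subtractf sum_distrib_left case_prod_unfold mult.commute)
  also have "\<dots> = H S" using sum_p arcs_swap[OF sg, of g] by simp
  finally show ?thesis by simp
qed

lemma HV_pos: "H V > 0"
  unfolding H_def using finV ne w_pos by (intro sum_pos) auto

lemma fp_formula:
  assumes "S \<subseteq> V"
  shows "fp V E 1 \<delta> S = H S / H V"
proof (rule unique_harm[OF _ _ _ _ assms])
  show "fp V E 1 \<delta> {} = H {} / H V" by (simp add: fp_empty H_def)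
  show "fp V E 1 \<delta> V = H V / H V" using HV_pos by (simp add: fp_V)
  show "fp V E 1 \<delta> S = (\<Sum>(u, v)\<in>arcs V E. p u v * fp V E 1 \<delta> (copy_type S u v))"
    if "S \<noteq> V" for S using fp_harm that by blast
  show "H S / H V = (\<Sum>(u, v)\<in>arcs V E. p u v * (H (copy_type S u v) / H V))"
    if "S \<subseteq> V" for S
    using H_harm[OF that] by (simp add: sum_divide_distrib case_prod_unfold)
qed

end


lemma quot_deriv:
  fixes a0 a1 b0 b1 x :: real
  assumes "b0 + x * b1 \<noteq> 0"
  shows "((\<lambda>t. (a0 + t * a1) / (b0 + t * b1)) has_real_derivative ((a1 * b0 - a0 * b1) / (b0 + x * b1)^2)) (at x within S)"
proof -
  have "((\<lambda>t. (a0 + t * a1) / (b0 + t * b1)) has_real_derivative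
      ((0 + 1 * a1) * (b0 + x * b1) - (0 + 1 * b1) * (a0 + x * a1)) / ((b0 + x * b1) ^ Suc (Suc 0))) (at x within S)"
    by (intro DERIV_quotient DERIV_add DERIV_const DERIV_cmult_right DERIV_ident assms DERIV_mult)
  moreover have "((0 + 1 * a1) * (b0 + x * b1) - (0 + 1 * b1) * (a0 + x * a1)) / ((b0 + x * b1) ^ Suc (Suc 0))
     = (a1 * b0 - a0 * b1) / (b0 + x * b1)^2"
    by (simp add: algebra_simps power2_eq_square)
  ultimately show ?thesis by simp
qed

lemma hit_V: "hit V E r d n V = 1"
  by (cases n) simp_all

lemma fp_VV: "fp V E r d V = 1"
  unfolding fp_def hit_V by simp

theorem mainTheorem18:
  fixes V :: "'a set" and E :: "'a \<Rightarrow> 'a \<Rightarrow> bool" and d1 d2 :: nat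
  assumes "simple_graph V E" and "connected_graph V E" and "card V \<ge> 1"
    and "d1 \<le> d2"
    and "\<forall>v\<in>V. deg V E v = d1 \<or> deg V E v = d2"
    and "\<exists>v\<in>V. deg V E v = d1" and "\<exists>v\<in>V. deg V E v = d2"
  defines "n1 \<equiv> card {v \<in> V. deg V E v = d1}"
    and "n2 \<equiv> card {v \<in> V. deg V E v = d2}"
  defines "D \<equiv> (\<lambda>\<delta>::real. real d1 * real n2 + real d2 * real n1
                   + \<delta> * (real d1 - real d2) * (real n1 - real n2))"
  defines "Q \<equiv> (\<lambda>\<delta>::real. (real d2 - real d1) * (real d1 + real d2) / (D \<delta>)\<^sup>2)"
  shows "\<forall>\<delta>\<in>{0..1::real}.
           (\<forall>u\<in>V. deg V E u = d1 \<longrightarrow>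
              ((\<lambda>\<delta>'. fp V E 1 \<delta>' {u}) has_real_derivative (- real n2 * Q \<delta>)) (at \<delta> within {0..1}))
         \<and> (\<forall>u\<in>V. deg V E u = d2 \<longrightarrow>
              ((\<lambda>\<delta>'. fp V E 1 \<delta>' {u}) has_real_derivative (real n1 * Q \<delta>)) (at \<delta> within {0..1}))
         \<and> (d1 < d2 \<longrightarrow> - real n2 * Q \<delta> < 0 \<and> real n1 * Q \<delta> > 0)
         \<and> (\<not> d1 < d2 \<longrightarrow> - real n2 * Q \<delta> = 0 \<and> real n1 * Q \<delta> = 0)"
proof (intro ballI, goal_cases)
  case (1 \<delta>)
  then have \<delta>: "\<delta> \<in> {0..1}" by simp
  have finV: "finite V" using assms(1) by (simp add: simple_graph_def)
  have n1p: "n1 \<ge> 1"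
  proof -
    have "{v \<in> V. deg V E v = d1} \<noteq> {}" using assms(6) by auto
    then have "card {v \<in> V. deg V E v = d1} > 0" using finV by (simp add: card_gt_0_iff)
    then show ?thesis unfolding n1_def by simp
  qed
  have n2p: "n2 \<ge> 1"
  proof -
    have "{v \<in> V. deg V E v = d2} \<noteq> {}" using assms(7) by auto
    then have "card {v \<in> V. deg V E v = d2} > 0" using finV by (simp add: card_gt_0_iff)
    then show ?thesis unfolding n2_def by simp
  qed
  show ?case
  proof (cases "d1 = d2")
    case True
    then have Q0: "Q \<delta> = 0" unfolding Q_def by simp
    have const: "\<exists>c. \<forall>t\<in>{0..1::real}. fp V E 1 t {u} = c" if u: "u \<in> V" for u
    proof (cases "card V = 1")
      case True
      then obtain x where "V = {x}" by (metis card_1_singletonE)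
      then have "{u} = V" using u by simp
      then show ?thesis using fp_VV by metis
    next
      case False
      then have N2: "card V \<ge> 2" using assms(3) by simp
      have dp: "deg V E v \<ge> 1" if "v \<in> V" for v using deg_pos[OF assms(1,2) N2 that] .
      have d1p: "d1 \<ge> 1" using assms(6) dp by auto
      have ne: "V \<noteq> {}" using u by auto
      have "fp V E 1 t {u} = 1 / real (card V)" if t: "t \<in> {0..1}" for t
      proof -
        interpret G2 V E t d1 d2
          by unfold_locales (use assms(1,2,5) dp ne t d1p True in auto)
        have wx: "w x = real d1" if "x \<in> V" for x
          using degs[OF that] True unfolding w_def by (auto simp: algebra_simps)
        have "H V = real (card V) * real d1" unfolding H_def using wx by simp
        moreover have "H {u} = real d1" using wx[OF u] by (simp add: H_def)
        ultimately show ?thesis using fp_formula[of "{u}"] u d1p by simp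
      qed
      then show ?thesis by blast
    qed
    have der: "((\<lambda>\<delta>'. fp V E 1 \<delta>' {u}) has_real_derivative 0) (at \<delta> within {0..1})" if uV: "u \<in> V" for u
    proof -
      obtain c where c: "\<forall>t\<in>{0..1::real}. fp V E 1 t {u} = c" using const[OF uV] by blast
      show ?thesis
        by (rule has_field_derivative_transform_within[OF DERIV_const[of c] zero_less_one \<delta>])
           (use c in auto)
    qed
    have A1: "((\<lambda>\<delta>'. fp V E 1 \<delta>' {u}) has_real_derivative (- real n2 * Q \<delta>)) (at \<delta> within {0..1})"
      if "u \<in> V" for u using der[OF that] Q0 by simp
    have A2: "((\<lambda>\<delta>'. fp V E 1 \<delta>' {u}) has_real_derivative (real n1 * Q \<delta>)) (at \<delta> within {0..1})"
      if "u \<in> V" for u using der[OF that] Q0 by simp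
    show ?thesis using A1 A2 Q0 True by simp
  next
    case False
    then have lt: "d1 < d2" using assms(4) by simp
    obtain x1 where x1: "x1 \<in> V" "deg V E x1 = d1" using assms(6) by blast
    obtain x2 where x2: "x2 \<in> V" "deg V E x2 = d2" using assms(7) by blast
    have "x1 \<noteq> x2" using x1 x2 lt by auto
    then have "card {x1, x2} = 2" by simp
    moreover have "card {x1, x2} \<le> card V" using x1 x2 finV by (intro card_mono) auto
    ultimately have N2: "card V \<ge> 2" by simp
    have dp: "deg V E v \<ge> 1" if "v \<in> V" for v using deg_pos[OF assms(1,2) N2 that] .
    have d1p: "d1 \<ge> 1" using x1 dp by auto
    have ne: "V \<noteq> {}" using x1 by auto
    define b0 where "b0 = real d1 * real n2 + real d2 * real n1"
    define b1 where "b1 = (real d1 - real d2) * (real n1 - real n2)"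
    have Dt: "D t = b0 + t * b1" for t unfolding D_def b0_def b1_def by (simp add: algebra_simps)
    have key: "fp V E 1 t {u} = (if deg V E u = d1 then (real d2 + t * (real d1 - real d2)) / (b0 + t * b1)
                                 else (real d1 + t * (real d2 - real d1)) / (b0 + t * b1)) \<and> b0 + t * b1 > 0"
      if t: "t \<in> {0..1}" and u: "u \<in> V" for t u
    proof -
      interpret G2 V E t d1 d2
        by unfold_locales (use assms(1,2,5) dp ne t d1p lt in auto)
      have wx: "w x = (if deg V E x = d1 then real d2 + t * (real d1 - real d2)
                                 else real d1 + t * (real d2 - real d1))" if "x \<in> V" for x
        using degs[OF that] lt unfolding w_def by (auto simp: algebra_simps)
      have "H V = (\<Sum>x\<in>V. (if deg V E x = d1 then real d2 + t * (real d1 - real d2)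
                                 else real d1 + t * (real d2 - real d1)))"
        unfolding H_def using wx by simp
      also have "\<dots> = real (card (V \<inter> {x. deg V E x = d1})) * (real d2 + t * (real d1 - real d2))
          + real (card (V \<inter> - {x. deg V E x = d1})) * (real d1 + t * (real d2 - real d1))"
        by (simp add: sum.If_cases finV)
      also have "V \<inter> {x. deg V E x = d1} = {v \<in> V. deg V E v = d1}" by auto
      also have "V \<inter> - {x. deg V E x = d1} = {v \<in> V. deg V E v = d2}" using degs lt by auto
      finally have "H V = b0 + t * b1" unfolding b0_def b1_def n1_def[symmetric] n2_def[symmetric]
        by (simp add: algebra_simps)
      moreover have "H {u} = w u" by (simp add: H_def)
      ultimately show ?thesis using fp_formula[of "{u}"] u wx[OF u] HV_pos by simp
    qed
    have Dpos: "D \<delta> > 0" using key[OF \<delta> x1(1)] Dt by simp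
    have der: "((\<lambda>\<delta>'. fp V E 1 \<delta>' {u}) has_real_derivative
         (if deg V E u = d1 then - real n2 * Q \<delta> else real n1 * Q \<delta>)) (at \<delta> within {0..1})" if u: "u \<in> V" for u
    proof (cases "deg V E u = d1")
      case True
      have "((\<lambda>t. (real d2 + t * (real d1 - real d2)) / (b0 + t * b1)) has_real_derivative
         (((real d1 - real d2) * b0 - real d2 * b1) / (b0 + \<delta> * b1)^2)) (at \<delta> within {0..1})"
        by (rule quot_deriv) (use Dpos Dt in auto)
      moreover have "((real d1 - real d2) * b0 - real d2 * b1) / (b0 + \<delta> * b1)^2 = - real n2 * Q \<delta>"
      proof -
        have "(real d1 - real d2) * b0 - real d2 * b1 = - real n2 * ((real d2 - real d1) * (real d1 + real d2))"
          unfolding b0_def b1_def by (simp add: algebra_simps)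
        then show ?thesis unfolding Q_def Dt by simp
      qed
      ultimately have "((\<lambda>t. (real d2 + t * (real d1 - real d2)) / (b0 + t * b1)) has_real_derivative
         (- real n2 * Q \<delta>)) (at \<delta> within {0..1})" by simp
      note Dr = this
      have eqf: "(real d2 + t * (real d1 - real d2)) / (b0 + t * b1) = fp V E 1 t {u}" if "t \<in> {0..1}" for t
        using key[OF that u] True by simp
      have "((\<lambda>\<delta>'. fp V E 1 \<delta>' {u}) has_real_derivative (- real n2 * Q \<delta>)) (at \<delta> within {0..1})"
        by (rule has_field_derivative_transform_within[OF Dr zero_less_one \<delta> eqf])
      then show ?thesis using True by simp
    next
      case False
      have "((\<lambda>t. (real d1 + t * (real d2 - real d1)) / (b0 + t * b1)) has_real_derivative
         (((real d2 - real d1) * b0 - real d1 * b1) / (b0 + \<delta> * b1)^2)) (at \<delta> within {0..1})"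
        by (rule quot_deriv) (use Dpos Dt in auto)
      moreover have "((real d2 - real d1) * b0 - real d1 * b1) / (b0 + \<delta> * b1)^2 = real n1 * Q \<delta>"
      proof -
        have "(real d2 - real d1) * b0 - real d1 * b1 = real n1 * ((real d2 - real d1) * (real d1 + real d2))"
          unfolding b0_def b1_def by (simp add: algebra_simps)
        then show ?thesis unfolding Q_def Dt by simp
      qed
      ultimately have "((\<lambda>t. (real d1 + t * (real d2 - real d1)) / (b0 + t * b1)) has_real_derivative
         (real n1 * Q \<delta>)) (at \<delta> within {0..1})" by simp
      note Dr = this
      have eqf: "(real d1 + t * (real d2 - real d1)) / (b0 + t * b1) = fp V E 1 t {u}" if "t \<in> {0..1}" for t
        using key[OF that u] False by simp
      have "((\<lambda>\<delta>'. fp V E 1 \<delta>' {u}) has_real_derivative (real n1 * Q \<delta>)) (at \<delta> within {0..1})"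
        by (rule has_field_derivative_transform_within[OF Dr zero_less_one \<delta> eqf])
      then show ?thesis using False by simp
    qed
    have Qp: "Q \<delta> > 0" unfolding Q_def using lt Dpos by (intro divide_pos_pos mult_pos_pos) auto
    have A1: "((\<lambda>\<delta>'. fp V E 1 \<delta>' {u}) has_real_derivative (- real n2 * Q \<delta>)) (at \<delta> within {0..1})"
      if "u \<in> V" "deg V E u = d1" for u using der[OF that(1)] that(2) by simp
    have A2: "((\<lambda>\<delta>'. fp V E 1 \<delta>' {u}) has_real_derivative (real n1 * Q \<delta>)) (at \<delta> within {0..1})"
      if "u \<in> V" "deg V E u = d2" for u using der[OF that(1)] that(2) lt by simp
    have A3: "- real n2 * Q \<delta> < 0 \<and> real n1 * Q \<delta> > 0" using Qp n1p n2p by simp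
    show ?thesis using A1 A2 A3 lt by blast
  qed
qed

end
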